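(* Let $\mathbb{S}\subseteq\mathbb{R}$ be an interval, let $\gamma>0$, and let $f:\mathbb{S}\to(0,\infty)$ be twice differentiable such that $H(z)=\gamma\log\big(1+[f(z)]^{1/\gamma}\big)$ is twice continuously differentiable on $\mathbb{S}$. Then the scalar matching loss $\mathcal{L}_m(\hat s,s)=H(\hat s)-H(s)-(\hat s-s)H'(s)$ is convex in $\hat s$ over $\mathbb{S}$ (for all $s\in\mathbb{S}$) if and only if $$f''(z)+\Big[\frac1\gamma-1-\frac1\gamma\cdot\frac{[f(z)]^{1/\gamma}}{1+[f(z)]^{1/\gamma}}\Big]\frac{[f'(z)]^2}{f(z)}\ge0\quad\text{for all }z\in\mathbb{S}.$$
   Context: $f$ is the score-transform function; equivalently $f=e^{Q}$ with $Q$ the log score-transform, and $H(z)=\gamma\log(1+e^{Q(z)/\gamma})$ is the $\gamma$-regularized composite Softplus primitive. *)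

theory Defs
  imports "HOL-Analysis.Analysis"
begin

definition Hsp :: "real \<Rightarrow> (real \<Rightarrow> real) \<Rightarrow> real \<Rightarrow> real" where
  "Hsp \<gamma> f z = \<gamma> * ln (1 + f z powr (1 / \<gamma>))"

definition match_loss :: "(real \<Rightarrow> real) \<Rightarrow> (real \<Rightarrow> real) \<Rightarrow> real \<Rightarrow> real \<Rightarrow> real" where
  "match_loss H H' shat s = H shat - H s - (shat - s) * H' s"

end

theory Submission imports Defs begin

lemma affine_key:
  fixes h :: "real \<Rightarrow> real" and u v x y a b s :: real
  assumes "u + v = 1"
  shows "(h (u * x + v * y) - b - (u * x + v * y - s) * a \<le> u * (h x - b - (x - s) * a) + v * (h y - b - (y - s) * a))
     = (h (u * x + v * y) \<le> u * h x + v * h y)"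
proof -
  have "u * (h x - b - (x - s) * a) + v * (h y - b - (y - s) * a) = u * h x + v * h y - (u + v) * b - (u * x + v * y - (u + v) * s) * a"
    by (simp add: algebra_simps)
  also have "\<dots> = u * h x + v * h y - b - (u * x + v * y - s) * a" using assms by simp
  finally have e: "u * (h x - b - (x - s) * a) + v * (h y - b - (y - s) * a) = u * h x + v * h y - b - (u * x + v * y - s) * a" .
  show ?thesis unfolding e by (rule iffI) linarith+
qed

lemma affine_conv:
  fixes h :: "real \<Rightarrow> real"
  shows "convex_on S (\<lambda>x. h x - b - (x - s) * a) \<longleftrightarrow> convex_on S h"
  unfolding convex_on_def real_scaleR_def
proof (intro conj_cong refl ball_cong all_cong imp_cong)
  fix x y u v :: real assume "u + v = 1"
  then show "(h (u * x + v * y) - b - (u * x + v * y - s) * a \<le> u * (h x - b - (x - s) * a) + v * (h y - b - (y - s) * a))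
     = (h (u * x + v * y) \<le> u * h x + v * h y)" by (rule affine_key)
qed

lemma ivl_mem:
  fixes S :: "real set"
  assumes "is_interval S" "a \<in> S" "b \<in> S" "a \<le> x" "x \<le> b"
  shows "x \<in> S"
  using assms unfolding is_interval_1 by blast

lemma notbot:
  fixes S :: "real set"
  assumes "is_interval S" "interior S \<noteq> {}" "z \<in> S"
  shows "at z within S \<noteq> bot"
proof -
  obtain p where p: "p \<in> interior S" using assms(2) by auto
  have pS: "p \<in> S" using p interior_subset by blast
  consider "z = p" | "z < p" | "p < z" by linarith
  then show ?thesis
  proof cases
    case 1 then have "at z within S = at z" using p at_within_interior by blast
    then show ?thesis using at_neq_bot by simp
  next
    case 2
    have "{z..p} \<subseteq> S" using ivl_mem[OF assms(1,3) pS] by (simp add: subset_eq)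
    then have "at z within {z..p} \<le> at z within S" by (rule at_le)
    moreover have "at z within {z..p} = at_right z" using 2 by (rule at_within_Icc_at_right)
    ultimately show ?thesis using trivial_limit_at_right_real by (metis bot_unique)
  next
    case 3
    have "{p..z} \<subseteq> S" using ivl_mem[OF assms(1) pS assms(3)] by (simp add: subset_eq)
    then have "at z within {p..z} \<le> at z within S" by (rule at_le)
    moreover have "at z within {p..z} = at_left z" using 3 by (rule at_within_Icc_at_left)
    ultimately show ?thesis using trivial_limit_at_left_real by (metis bot_unique)
  qed
qed

lemma mvt_within:
  fixes g g' :: "real \<Rightarrow> real"
  assumes "is_interval S" "a < b" "a \<in> S" "b \<in> S"
    and d: "\<forall>z\<in>S. (g has_real_derivative g' z) (at z within S)"
  shows "\<exists>\<xi>. a < \<xi> \<and> \<xi> < b \<and> g b - g a = (b - a) * g' \<xi>"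
proof -
  have sub: "{a..b} \<subseteq> S" using ivl_mem[OF assms(1,3,4)] by auto
  have "continuous_on S g" using d by (intro DERIV_continuous_on) auto
  then have c: "continuous_on {a..b} g" using sub continuous_on_subset by blast
  have sub2: "{a<..<b} \<subseteq> interior S" using sub by (intro interior_maximal) auto
  have int: "x \<in> interior S" if "a < x" "x < b" for x
    using sub2 that by auto
  have da: "(g has_real_derivative g' x) (at x)" if "a < x" "x < b" for x
  proof -
    have "x \<in> S" using int[OF that] interior_subset by blast
    then have "(g has_real_derivative g' x) (at x within S)" using d by auto
    then show ?thesis using at_within_interior[OF int[OF that]] by simp
  qed
  have dd: "g differentiable (at x)" if "a < x" "x < b" for x
    using da[OF that] real_differentiable_def by blast
  obtain l z where z: "a < z" "z < b" "DERIV g z :> l" "g b - g a = (b - a) * l"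
    using MVT[OF assms(2) c dd] by blast
  have "l = g' z" using DERIV_unique z(3) da[OF z(1,2)] by blast
  then show ?thesis using z by blast
qed

lemma mono_from_deriv:
  fixes g g' :: "real \<Rightarrow> real"
  assumes "is_interval S"
    and d: "\<forall>z\<in>S. (g has_real_derivative g' z) (at z within S)"
    and nn: "\<forall>z\<in>S. g' z \<ge> 0"
    and "x \<in> S" "y \<in> S" "x \<le> y"
  shows "g x \<le> g y"
proof (cases "x = y")
  case False
  then have xy: "x < y" using assms by simp
  from mvt_within[OF assms(1) xy assms(4,5) d] obtain \<xi> where
    \<xi>: "x < \<xi>" "\<xi> < y" "g y - g x = (y - x) * g' \<xi>" by blast
  have "\<xi> \<in> S" using ivl_mem[OF assms(1,4,5)] \<xi> by auto
  then have "(y - x) * g' \<xi> \<ge> 0" using nn xy by simp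
  then show ?thesis using \<xi>(3) by simp
qed simp

lemma convex_from_mono:
  fixes g g' :: "real \<Rightarrow> real"
  assumes A: "is_interval A"
    and d: "\<forall>z\<in>A. (g has_real_derivative g' z) (at z within A)"
    and m: "\<And>x y. x \<in> A \<Longrightarrow> y \<in> A \<Longrightarrow> x \<le> y \<Longrightarrow> g' x \<le> g' y"
  shows "convex_on A g"
proof (rule convex_on_linorderI)
  show "convex A" using A is_interval_convex_1 by blast
next
  fix t x y :: real
  assume t: "t > 0" "t < 1"
  assume xy: "x \<in> A" "y \<in> A" "x < y"
  define z where "z = (1 - t) * x + t * y"
  have xz: "z > x" using xy t by (simp add: z_def algebra_simps)
  have yz': "y - z = (1 - t) * (y - x)"
    by (simp add: z_def algebra_simps)
  have "(1 - t) * (y - x) > 0" using xy t by simp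
  then have yz: "z < y" using yz' by simp
  have zA: "z \<in> A" using ivl_mem[OF A xy(1,2)] xz yz by simp
  obtain \<xi> where \<xi>: "\<xi> > x" "\<xi> < z" "g z - g x = (z - x) * g' \<xi>"
    using mvt_within[OF A xz xy(1) zA d] by blast
  obtain \<eta> where \<eta>: "\<eta> > z" "\<eta> < y" "g y - g z = (y - z) * g' \<eta>"
    using mvt_within[OF A yz zA xy(2) d] by blast
  have "\<xi> \<in> A" using ivl_mem[OF A xy(1) zA] \<xi> by simp
  moreover have "\<eta> \<in> A" using ivl_mem[OF A zA xy(2)] \<eta> by simp
  ultimately have le: "g' \<xi> \<le> g' \<eta>" using m \<xi> \<eta> by simp
  have "(g y - g z) * (z - x) \<ge> (g z - g x) * (y - z)"
  proof -
    have "(g y - g z) * (z - x) = (y - z) * (z - x) * g' \<eta>" using \<eta>(3) by simp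
    moreover have "(g z - g x) * (y - z) = (y - z) * (z - x) * g' \<xi>" using \<xi>(3) by simp
    moreover have "(y - z) * (z - x) * g' \<xi> \<le> (y - z) * (z - x) * g' \<eta>"
      using le xz yz by (intro mult_left_mono) auto
    ultimately show ?thesis by linarith
  qed
  also have "z - x = t * (y - x)"
    by (simp add: z_def algebra_simps)
  also have "y - z = (1 - t) * (y - x)"
    by (simp add: z_def algebra_simps)
  finally have "(g y - g z) * t \<ge> (g z - g x) * (1 - t)"
    using xy by simp
  then show "(1 - t) * g x + t * g y \<ge> g ((1 - t) *\<^sub>R x + t *\<^sub>R y)"
    by (simp add: z_def algebra_simps)
qed


lemma tangent_within:
  fixes g :: "real \<Rightarrow> real"
  assumes cv: "convex_on S g" and I: "is_interval S" and cS: "c \<in> S" and xS: "x \<in> S"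
    and d: "(g has_real_derivative D) (at c within S)"
  shows "D * (x - c) \<le> g x - g c"
proof (cases x c rule: linorder_cases)
  case greater
  have sub: "{c..x} \<subseteq> S" using ivl_mem[OF I cS xS] by (simp add: subset_eq)
  have cv': "convex_on {c..x} g" using convex_on_subset[OF cv sub] by simp
  have d': "(g has_real_derivative D) (at c within {c..x})" using DERIV_subset[OF d sub] .
  have lim: "((\<lambda>y. (g y - g c) / (y - c)) \<longlongrightarrow> D) (at_right c)"
    using d' unfolding has_field_derivative_iff at_within_Icc_at_right[OF greater] .
  have ev: "eventually (\<lambda>y. (g y - g c) / (y - c) \<le> (g x - g c) / (x - c)) (at_right c)"
    using eventually_at_right_real[OF greater]
  proof eventually_elim
    fix y assume y: "y \<in> {c<..<x}"
    have "g y \<le> (g x - g c) / (x - c) * (y - c) + g c"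
      using convex_onD_Icc'[OF cv', of y] y by simp
    hence "g y - g c \<le> (g x - g c) / (x - c) * (y - c)" by simp
    thus "(g y - g c) / (y - c) \<le> (g x - g c) / (x - c)" using y by (simp add: divide_le_eq)
  qed
  have "D \<le> (g x - g c) / (x - c)"
    using tendsto_upperbound[OF lim ev trivial_limit_at_right_real] .
  thus ?thesis using greater by (simp add: le_divide_eq)
next
  case less
  have sub: "{x..c} \<subseteq> S" using ivl_mem[OF I xS cS] by (simp add: subset_eq)
  have cv': "convex_on {x..c} g" using convex_on_subset[OF cv sub] by simp
  have d': "(g has_real_derivative D) (at c within {x..c})" using DERIV_subset[OF d sub] .
  have lim: "((\<lambda>y. (g y - g c) / (y - c)) \<longlongrightarrow> D) (at_left c)"
    using d' unfolding has_field_derivative_iff at_within_Icc_at_left[OF less] .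
  have ev: "eventually (\<lambda>y. (g y - g c) / (y - c) \<ge> (g x - g c) / (x - c)) (at_left c)"
    using eventually_at_left_real[OF less]
  proof eventually_elim
    fix y assume y: "y \<in> {x<..<c}"
    have "g y \<le> (g x - g c) / (c - x) * (c - y) + g c"
      using convex_onD_Icc''[OF cv', of y] y by simp
    hence "g y - g c \<le> (g x - g c) / (c - x) * (c - y)" by simp
    also have "(g x - g c) / (c - x) * (c - y) = (g x - g c) / (x - c) * (y - c)"
      using y less by (simp add: field_simps)
    finally have "g y - g c \<le> (g x - g c) / (x - c) * (y - c)" .
    thus "(g y - g c) / (y - c) \<ge> (g x - g c) / (x - c)" using y by (simp add: le_divide_eq mult.commute)
  qed
  have "D \<ge> (g x - g c) / (x - c)"
    using tendsto_lowerbound[OF lim ev trivial_limit_at_left_real] .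
  thus ?thesis using less by (simp add: divide_le_eq)
qed simp

lemma deriv_mono_convex:
  fixes g g' :: "real \<Rightarrow> real"
  assumes cv: "convex_on S g" and I: "is_interval S"
    and d: "\<forall>z\<in>S. (g has_real_derivative g' z) (at z within S)"
    and "x \<in> S" "y \<in> S" "x \<le> y"
  shows "g' x \<le> g' y"
proof (cases "x = y")
  case False
  then have xy: "x < y" using assms by simp
  have 1: "g' x * (y - x) \<le> g y - g x" using tangent_within[OF cv I assms(4,5)] d assms(4) by blast
  have 2: "g' y * (x - y) \<le> g x - g y" using tangent_within[OF cv I assms(5,4)] d assms(5) by blast
  have "g' x * (y - x) \<le> g' y * (y - x)" using 1 2 by (simp add: algebra_simps)
  then show ?thesis using xy by simp
qed simp

lemma deriv_nonneg_mono:
  fixes g g' :: "real \<Rightarrow> real"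
  assumes m: "\<And>x y. x \<in> S \<Longrightarrow> y \<in> S \<Longrightarrow> x \<le> y \<Longrightarrow> g x \<le> g y"
    and d: "(g has_real_derivative D) (at z within S)" and zS: "z \<in> S"
    and nb: "at z within S \<noteq> bot"
  shows "D \<ge> 0"
proof -
  have lim: "((\<lambda>y. (g y - g z) / (y - z)) \<longlongrightarrow> D) (at z within S)"
    using d unfolding has_field_derivative_iff .
  have ev: "eventually (\<lambda>y. (g y - g z) / (y - z) \<ge> 0) (at z within S)"
    unfolding eventually_at_filter
  proof (rule always_eventually, intro allI impI)
    fix y assume y: "y \<noteq> z" "y \<in> S"
    show "(g y - g z) / (y - z) \<ge> 0"
    proof (cases "y < z")
      case True
      then have "g y \<le> g z" using m y zS by simp
      then show ?thesis using True by (simp add: divide_nonpos_neg)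
    next
      case False
      then have "z < y" using y by simp
      then have "g z \<le> g y" using m y zS by simp
      then show ?thesis using \<open>z < y\<close> by simp
    qed
  qed
  show ?thesis using tendsto_lowerbound[OF lim ev nb] .
qed


lemma u_deriv:
  fixes f :: "real \<Rightarrow> real"
  assumes "f z > 0" "(f has_real_derivative a) (at z within S)" "\<gamma> > 0"
  shows "((\<lambda>z. f z powr (1 / \<gamma>)) has_real_derivative (f z powr (1 / \<gamma>) * a / (\<gamma> * f z))) (at z within S)"
proof -
  have "((\<lambda>z. f z powr (1 / \<gamma>)) has_real_derivative ((1 / \<gamma>) * f z powr (1 / \<gamma> - 1) * a)) (at z within S)"
    by (rule DERIV_chain2[OF has_real_derivative_powr[OF assms(1), of "1 / \<gamma>"] assms(2)])
  moreover have "(1 / \<gamma>) * f z powr (1 / \<gamma> - 1) * a = f z powr (1 / \<gamma>) * a / (\<gamma> * f z)"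
  proof -
    have "f z powr (1 / \<gamma> - 1) = f z powr (1 / \<gamma>) / f z" using assms(1) by (simp add: powr_diff)
    then show ?thesis using assms by (simp add: field_simps)
  qed
  ultimately show ?thesis by simp
qed

lemma alg1:
  fixes g F U a :: real
  assumes "g > 0" "F > 0" "U > 0"
  shows "g * (1 / (1 + U) * (0 + U * a / (g * F))) = U * a / (F * (1 + U))"
proof -
  have "1 + U \<noteq> 0" "F \<noteq> 0" "g \<noteq> 0" using assms by auto
  then show ?thesis by (simp add: divide_simps)
qed

lemma H_deriv:
  fixes f :: "real \<Rightarrow> real"
  assumes fz: "f z > 0" and d: "(f has_real_derivative a) (at z within S)" and g: "\<gamma> > 0"
  shows "(Hsp \<gamma> f has_real_derivative
     (f z powr (1 / \<gamma>) * a / (f z * (1 + f z powr (1 / \<gamma>))))) (at z within S)"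
proof -
  let ?U = "f z powr (1 / \<gamma>)"
  have Hf: "Hsp \<gamma> f = (\<lambda>z. \<gamma> * ln (1 + f z powr (1 / \<gamma>)))" by (simp add: Hsp_def fun_eq_iff)
  have upos: "?U > 0" using fz by simp
  have d1: "((\<lambda>z. 1 + f z powr (1 / \<gamma>)) has_real_derivative (0 + ?U * a / (\<gamma> * f z))) (at z within S)"
    by (intro derivative_intros u_deriv fz d g)
  have d2: "((\<lambda>z. ln (1 + f z powr (1 / \<gamma>))) has_real_derivative (1 / (1 + ?U) * (0 + ?U * a / (\<gamma> * f z)))) (at z within S)"
    using DERIV_chain2[OF DERIV_ln_divide d1] upos by simp
  have d3: "((\<lambda>z. \<gamma> * ln (1 + f z powr (1 / \<gamma>))) has_real_derivative (\<gamma> * (1 / (1 + ?U) * (0 + ?U * a / (\<gamma> * f z))))) (at z within S)"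
    using DERIV_cmult[OF d2] .
  have p1: "1 + ?U > 0" using upos by linarith
  have "\<gamma> * (1 / (1 + ?U) * (0 + ?U * a / (\<gamma> * f z))) = ?U * a / (f z * (1 + ?U))"
    using alg1 g fz upos by blast
  then show ?thesis using d3 Hf by simp
qed

lemma Hd_deriv:
  fixes u f g :: "real \<Rightarrow> real"
  assumes du: "(u has_real_derivative u') (at z within S)"
    and df: "(f has_real_derivative a) (at z within S)"
    and dg: "(g has_real_derivative b) (at z within S)"
    and fz: "f z > 0" and uz: "u z > 0"
  shows "((\<lambda>z. u z * g z / (f z * (1 + u z))) has_real_derivative
     ((u z * b + u' * g z) * (f z * (1 + u z)) - u z * g z * (f z * (0 + u') + a * (1 + u z))) / (f z * (1 + u z) * (f z * (1 + u z))))
     (at z within S)"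
proof -
  have n: "((\<lambda>z. u z * g z) has_real_derivative (u z * b + u' * g z)) (at z within S)"
    using DERIV_mult'[OF du dg] .
  have e: "((\<lambda>z. 1 + u z) has_real_derivative (0 + u')) (at z within S)"
    by (intro derivative_intros du)
  have dd: "((\<lambda>z. f z * (1 + u z)) has_real_derivative (f z * (0 + u') + a * (1 + u z))) (at z within S)"
    using DERIV_mult'[OF df e] .
  have nz: "f z * (1 + u z) \<noteq> 0" using fz uz by simp
  show ?thesis using DERIV_divide[OF n dd nz] .
qed


lemma alg2:
  fixes g F U F1 F2 :: real
  assumes "g > 0" "F > 0" "U > 0"
  shows "((U * F2 + (U * F1 / (g * F)) * F1) * (F * (1 + U)) - U * F1 * (F * (0 + U * F1 / (g * F)) + F1 * (1 + U)))
      / (F * (1 + U) * (F * (1 + U)))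
    = U / ((1 + U) * F) * (F2 + (1 / g - 1 - (1 / g) * (U / (1 + U))) * (F1\<^sup>2 / F))"
proof -
  have "1 + U \<noteq> 0" "F \<noteq> 0" "g \<noteq> 0" using assms by auto
  then show ?thesis by (simp add: divide_simps power2_eq_square) (simp add: algebra_simps)
qed

theorem corollaryG2:
  fixes S :: "real set" and \<gamma> :: real
    and f f' f'' :: "real \<Rightarrow> real"
    and H' H'' :: "real \<Rightarrow> real"
  assumes S_interval: "is_interval S"
    and S_nondeg: "interior S \<noteq> {}"
    and gamma_pos: "\<gamma> > 0"
    and f_pos: "\<forall>z\<in>S. f z > 0"
    and f_d1: "\<forall>z\<in>S. (f has_real_derivative f' z) (at z within S)"
    and f_d2: "\<forall>z\<in>S. (f' has_real_derivative f'' z) (at z within S)"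
    and H_d1: "\<forall>z\<in>S. (Hsp \<gamma> f has_real_derivative H' z) (at z within S)"
    and H_d2: "\<forall>z\<in>S. (H' has_real_derivative H'' z) (at z within S)"
    and H_C2: "continuous_on S H''"
  shows "(\<forall>s\<in>S. convex_on S (\<lambda>shat. match_loss (Hsp \<gamma> f) H' shat s)) \<longleftrightarrow>
         (\<forall>z\<in>S. f'' z + (1 / \<gamma> - 1 - (1 / \<gamma>) * (f z powr (1 / \<gamma>) / (1 + f z powr (1 / \<gamma>))))
                    * ((f' z)\<^sup>2 / f z) \<ge> 0)"
proof -
  define u where "u = (\<lambda>z. f z powr (1 / \<gamma>))"
  define Hd where "Hd = (\<lambda>z. u z * f' z / (f z * (1 + u z)))"
  define C where "C = (\<lambda>z. f'' z + (1 / \<gamma> - 1 - (1 / \<gamma>) * (f z powr (1 / \<gamma>) / (1 + f z powr (1 / \<gamma>))))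
                    * ((f' z)\<^sup>2 / f z))"
  let ?H = "Hsp \<gamma> f"
  have upos: "u z > 0" if "z \<in> S" for z
  proof -
    have "f z > 0" using f_pos that by blast
    then show ?thesis by (simp add: u_def)
  qed
  have nb: "at z within S \<noteq> bot" if "z \<in> S" for z using notbot[OF S_interval S_nondeg that] .
  have H'eq: "H' z = Hd z" if z: "z \<in> S" for z
  proof -
    have "(?H has_real_derivative Hd z) (at z within S)"
      using H_deriv[of f z "f' z" S \<gamma>] f_pos f_d1 gamma_pos z by (simp add: Hd_def u_def)
    then show ?thesis using has_field_derivative_unique H_d1 z nb[OF z] by blast
  qed
  have du: "(u has_real_derivative (u z * f' z / (\<gamma> * f z))) (at z within S)" if z: "z \<in> S" for z
    using u_deriv[of f z "f' z" S \<gamma>] f_pos f_d1 gamma_pos z unfolding u_def by blast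
  have H''eq: "H'' z = u z / ((1 + u z) * f z) * C z" if z: "z \<in> S" for z
  proof -
    have fz: "f z > 0" using f_pos z by blast
    have d: "(Hd has_real_derivative
       ((u z * f'' z + (u z * f' z / (\<gamma> * f z)) * f' z) * (f z * (1 + u z)) - u z * f' z * (f z * (0 + u z * f' z / (\<gamma> * f z)) + f' z * (1 + u z)))
      / (f z * (1 + u z) * (f z * (1 + u z)))) (at z within S)"
    proof -
      have a1: "(f has_real_derivative f' z) (at z within S)" using f_d1 z by blast
      have a2: "(f' has_real_derivative f'' z) (at z within S)" using f_d2 z by blast
      show ?thesis unfolding Hd_def using Hd_deriv[OF du[OF z] a1 a2 fz upos[OF z]] by simp
    qed
    have d2: "(Hd has_real_derivative H'' z) (at z within S)"
    proof (rule has_field_derivative_transform_within[OF _ zero_less_one z])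
      show "(H' has_real_derivative H'' z) (at z within S)" using H_d2 z by blast
      show "\<And>x. x \<in> S \<Longrightarrow> dist x z < 1 \<Longrightarrow> H' x = Hd x" using H'eq by blast
    qed
    have "H'' z = ((u z * f'' z + (u z * f' z / (\<gamma> * f z)) * f' z) * (f z * (1 + u z)) - u z * f' z * (f z * (0 + u z * f' z / (\<gamma> * f z)) + f' z * (1 + u z)))
      / (f z * (1 + u z) * (f z * (1 + u z)))"
      using has_field_derivative_unique[OF d2 d nb[OF z]] .
    also have "\<dots> = u z / ((1 + u z) * f z) * C z"
    proof -
      have uu: "f z powr (1 / \<gamma>) = u z" by (simp add: u_def)
      show ?thesis unfolding C_def uu by (rule alg2[OF gamma_pos fz upos[OF z]])
    qed
    finally show ?thesis .
  qed
  have sign: "H'' z \<ge> 0 \<longleftrightarrow> C z \<ge> 0" if z: "z \<in> S" for z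
  proof -
    have pos: "u z / ((1 + u z) * f z) > 0" using upos[OF z] f_pos z by simp
    have gen: "\<And>k c :: real. k > 0 \<Longrightarrow> (0 \<le> k * c) = (0 \<le> c)" by (simp add: zero_le_mult_iff)
    show ?thesis unfolding H''eq[OF z] by (rule gen[OF pos])
  qed
  have lhs: "(\<forall>s\<in>S. convex_on S (\<lambda>shat. match_loss ?H H' shat s)) \<longleftrightarrow> convex_on S ?H"
  proof -
    obtain s0 where "s0 \<in> S" using S_nondeg interior_subset by blast
    note s0 = this
    have e: "convex_on S (\<lambda>shat. match_loss ?H H' shat s) \<longleftrightarrow> convex_on S ?H" for s
      unfolding match_loss_def by (rule affine_conv)
    show ?thesis unfolding e using s0 by blast
  qed
  have cvx: "convex_on S ?H \<longleftrightarrow> (\<forall>z\<in>S. H'' z \<ge> 0)"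
  proof
    assume cv: "convex_on S ?H"
    have m: "H' x \<le> H' y" if "x \<in> S" "y \<in> S" "x \<le> y" for x y
      using deriv_mono_convex[OF cv S_interval H_d1 that] .
    show "\<forall>z\<in>S. H'' z \<ge> 0"
    proof
      fix z assume z: "z \<in> S"
      have d: "(H' has_real_derivative H'' z) (at z within S)" using H_d2 z by blast
      show "H'' z \<ge> 0" by (rule deriv_nonneg_mono[OF m d z nb[OF z]])
    qed
  next
    assume nn: "\<forall>z\<in>S. H'' z \<ge> 0"
    have m: "H' x \<le> H' y" if "x \<in> S" "y \<in> S" "x \<le> y" for x y
      using mono_from_deriv[OF S_interval H_d2 nn that] .
    show "convex_on S ?H" using convex_from_mono[OF S_interval H_d1 m] by blast
  qed
  show ?thesis unfolding lhs cvx
  proof (intro iffI ballI)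
    fix z assume A: "\<forall>z\<in>S. 0 \<le> H'' z" and z: "z \<in> S"
    have "0 \<le> C z" using sign[OF z] A z by blast
    then show "0 \<le> f'' z + (1 / \<gamma> - 1 - (1 / \<gamma>) * (f z powr (1 / \<gamma>) / (1 + f z powr (1 / \<gamma>))))
                    * ((f' z)\<^sup>2 / f z)" unfolding C_def .
  next
    fix z assume A: "\<forall>z\<in>S. 0 \<le> f'' z + (1 / \<gamma> - 1 - (1 / \<gamma>) * (f z powr (1 / \<gamma>) / (1 + f z powr (1 / \<gamma>))))
                    * ((f' z)\<^sup>2 / f z)" and z: "z \<in> S"
    have "0 \<le> C z" using A z unfolding C_def by blast
    then show "0 \<le> H'' z" using sign[OF z] by blast
  qed
qed

end
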